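(* Let $r\in\mathbb R$ and $\lambda\in\mathbb O$ with $r^2+|\lambda|^2=1$. The map $\mathcal R_{r,\lambda}:U_1/_\sim\to U_1/_\sim$, $[1,u,v]\mapsto[1,\ ru+\lambda v,\ \bar\lambda u-rv]$, is an isometry of $U_1/_\sim\subset\mathbb OP^2$ with the metric $g$.
   Context: Octonions: $\mathbb O=\mathbb H\oplus\mathbb H$ with product $(q_1,q_2)(p_1,p_2)=(q_1p_1-\bar p_2q_2,\ p_2q_1+q_2\bar p_1)$, conjugation $\overline{(q_1,q_2)}=(\bar q_1,-q_2)$, $\mathrm{Re}$ the real part, $\langle a,b\rangle=\mathrm{Re}(a\bar b)$, $|a|^2=\langle a,a\rangle$. $\mathbb OP^2=\mathcal U/_\sim$ with $\mathcal U=(\{1\}\times\mathbb O^2)\cup(\mathbb O\times\{1\}\times\mathbb O)\cup(\mathbb O^2\times\{1\})$ and $[a,b,c]\sim[d,e,f]$ iff $(a,b,c)=(d\lambda,e\lambda,f\lambda)$ for some $\lambda\in\mathbb O\setminus\{0\}$; $U_1/_\sim=\{[1,u,v]\}$ is identified with $\mathbb O^2$ via $(u,v)$. The metric $g$ on this chart is the one with quadratic form, for tangent vector $(du,dv)=(\xi,\eta)$, $ds^2=\frac{|\xi|^2(1+|v|^2)+|\eta|^2(1+|u|^2)-2\mathrm{Re}[(u\bar v)(\eta\bar\xi)]}{(1+|u|^2+|v|^2)^2}$ (and the same formula in the other two charts $[u,1,v]\mapsto(u,v)$, $[u,v,1]\mapsto(u,v)$). *)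

theory Defs
  imports "HOL-Analysis.Analysis"
begin

text \<open>Quaternions a + b i + c j + d k as 4-tuples of reals (a Euclidean space via the
product-type instances), octonions as pairs of quaternions (Cayley--Dickson).\<close>

type_synonym quat = "real \<times> real \<times> real \<times> real"
type_synonym oct = "quat \<times> quat"

fun qmul :: "quat \<Rightarrow> quat \<Rightarrow> quat" where
  "qmul (a1, b1, c1, d1) (a2, b2, c2, d2) =
     (a1*a2 - b1*b2 - c1*c2 - d1*d2,
      a1*b2 + b1*a2 + c1*d2 - d1*c2,
      a1*c2 - b1*d2 + c1*a2 + d1*b2,
      a1*d2 + b1*c2 - c1*b2 + d1*a2)"

fun qconj :: "quat \<Rightarrow> quat" where
  "qconj (a, b, c, d) = (a, -b, -c, -d)"

fun omul :: "oct \<Rightarrow> oct \<Rightarrow> oct" where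
  "omul (q1, q2) (p1, p2) = (qmul q1 p1 - qmul (qconj p2) q2, qmul p2 q1 + qmul q2 (qconj p1))"

fun oconj :: "oct \<Rightarrow> oct" where
  "oconj (q1, q2) = (qconj q1, - q2)"

definition ore :: "oct \<Rightarrow> real" where
  "ore a = fst (fst a)"

definition onorm2 :: "oct \<Rightarrow> real" where
  "onorm2 a = ore (omul a (oconj a))"

text \<open>The metric g on the chart U_1 = {[1,u,v]} identified with O^2:
 quadratic form at the point (u,v) evaluated on the tangent vector (xi,eta).\<close>
definition ds2 :: "oct \<times> oct \<Rightarrow> oct \<times> oct \<Rightarrow> real" where
  "ds2 p w = (let (u, v) = p; (\<xi>, \<eta>) = w in
     (onorm2 \<xi> * (1 + onorm2 v) + onorm2 \<eta> * (1 + onorm2 u)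
       - 2 * ore (omul (omul u (oconj v)) (omul \<eta> (oconj \<xi>))))
     / (1 + onorm2 u + onorm2 v)^2)"

definition Rmap :: "real \<Rightarrow> oct \<Rightarrow> oct \<times> oct \<Rightarrow> oct \<times> oct" where
  "Rmap r l p = (let (u, v) = p in
     (r *\<^sub>R u + omul l v, omul (oconj l) u - r *\<^sub>R v))"

definition isometry_g :: "(oct \<times> oct \<Rightarrow> oct \<times> oct) \<Rightarrow> bool" where
  "isometry_g F \<longleftrightarrow> bij F \<and> (\<forall>p. F differentiable (at p)) \<and> (\<forall>p. inv F differentiable (at p))
     \<and> (\<forall>p w. ds2 (F p) (frechet_derivative F (at p) w) = ds2 p w)"

end

theory Submission
  imports Defs
begin

lemma oct_cases: obtains a b c d e f g h where "x = ((a,b,c,d),(e,f,g,h))"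
  by (metis prod.exhaust)

definition ip :: "oct \<Rightarrow> oct \<Rightarrow> real" where "ip x y = ore (omul x (oconj y))"

lemma A1: "onorm2 (r *\<^sub>R u + omul l v) = r^2 * onorm2 u + onorm2 l * onorm2 v + 2 * r * ip (omul l v) u"
  apply (rule oct_cases[of l], rule oct_cases[of u], rule oct_cases[of v])
  apply (simp add: onorm2_def ip_def ore_def)
  apply (thin_tac "_ = _")+
  apply algebra
  done

lemma A2: "onorm2 (omul (oconj l) u - r *\<^sub>R v) = onorm2 l * onorm2 u + r^2 * onorm2 v - 2 * r * ip (omul l v) u"
  apply (rule oct_cases[of l], rule oct_cases[of u], rule oct_cases[of v])
  apply (simp add: onorm2_def ip_def ore_def)
  apply (thin_tac "_ = _")+
  apply (intro conjI)?
  apply algebra+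
  done
lemma B1: "ore (omul P (omul e (oconj x))) = ip P (omul x (oconj e))"
  apply (rule oct_cases[of P], rule oct_cases[of e], rule oct_cases[of x])
  apply (simp add: ip_def ore_def)
  apply (simp add: algebra_simps)
  done
lemma B2: "ip l (omul x (oconj y)) = ip (omul l y) x"
  apply (rule oct_cases[of l], rule oct_cases[of y], rule oct_cases[of x])
  apply (simp add: ip_def ore_def)
  apply (simp add: algebra_simps)
  done
lemma B3: "ip P l = ip l P"
  apply (rule oct_cases[of l], rule oct_cases[of P])
  apply (simp add: ip_def ore_def)
  done
lemma C: "ip (a *\<^sub>R l - c *\<^sub>R P) (b *\<^sub>R l - c *\<^sub>R Q) = a * b * onorm2 l - a*c*ip l Q - c*b*ip P l + c^2 * ip P Q"
  apply (rule oct_cases[of l], rule oct_cases[of P], rule oct_cases[of Q])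
  apply (simp add: ip_def ore_def onorm2_def)
  apply (thin_tac "_ = _")+
  apply (intro conjI)?
  apply algebra+
  done
lemma D1: "omul l (omul (oconj l) u) = onorm2 l *\<^sub>R u"
  apply (rule oct_cases[of l], rule oct_cases[of u])
  apply (simp add: onorm2_def ore_def)
  apply (thin_tac "_ = _")+
  apply (intro conjI)?
  apply algebra+
  done
lemma D2: "omul (oconj l) (omul l u) = onorm2 l *\<^sub>R u"
  apply (rule oct_cases[of l], rule oct_cases[of u])
  apply (simp add: onorm2_def ore_def)
  apply (thin_tac "_ = _")+
  apply (intro conjI)?
  apply algebra+
  done
lemma L1: "omul l (x + y) = omul l x + omul l y"
  apply (rule oct_cases[of l], rule oct_cases[of x], rule oct_cases[of y])
  apply (simp add: algebra_simps)
  done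
lemma L2: "omul l (c *\<^sub>R x) = c *\<^sub>R omul l x"
  apply (rule oct_cases[of l], rule oct_cases[of x])
  apply (simp add: algebra_simps)
  done
lemma final:
  fixes r nl nu nv nx ne al be T :: real
  assumes h: "r^2 + nl = 1"
  shows "((r^2 * nx + nl * ne + 2 * r * be) * (1 + (nl * nu + r^2 * nv - 2 * r * al))
         + (nl * nx + r^2 * ne - 2 * r * be) * (1 + (r^2 * nu + nl * nv + 2 * r * al))
         - 2 * ((r * (nu - nv) + 2 * al) * (r * (nx - ne) + 2 * be) * nl
                - (r * (nu - nv) + 2 * al) * (r^2 + nl) * be
                - (r^2 + nl) * (r * (nx - ne) + 2 * be) * al
                + (r^2 + nl)^2 * T))
        / (1 + (r^2 * nu + nl * nv + 2 * r * al) + (nl * nu + r^2 * nv - 2 * r * al))^2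
       = (nx * (1 + nv) + ne * (1 + nu) - 2 * T) / (1 + nu + nv)^2"
proof -
  show ?thesis by (rule arg_cong2[where f="(/)"]; use h in algebra)
qed

lemma A3: "omul (r *\<^sub>R u + omul l v) (oconj (omul (oconj l) u - r *\<^sub>R v)) =
   (r * (onorm2 u - onorm2 v) + 2 * ip (omul l v) u) *\<^sub>R l - (r^2 + onorm2 l) *\<^sub>R omul u (oconj v)"
  apply (rule oct_cases[of l], rule oct_cases[of u], rule oct_cases[of v])
  apply (simp add: onorm2_def ip_def ore_def)
  apply (thin_tac "_ = _")+
  apply (intro conjI)
  apply algebra+
  done

lemma L3: "omul l (x - y) = omul l x - omul l y"
  apply (rule oct_cases[of l], rule oct_cases[of x], rule oct_cases[of y])
  apply (simp add: algebra_simps)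
  done

lemma Rmap_simp: "Rmap r l (u, v) = (r *\<^sub>R u + omul l v, omul (oconj l) u - r *\<^sub>R v)"
  by (simp add: Rmap_def)

lemma Rmap_linear: "linear (Rmap r l)"
proof (rule linearI)
  fix p q :: "oct \<times> oct"
  show "Rmap r l (p + q) = Rmap r l p + Rmap r l q"
  proof -
    obtain u v where "p = (u, v)" by (metis prod.exhaust)
    moreover obtain u' v' where "q = (u', v')" by (metis prod.exhaust)
    ultimately show ?thesis by (simp add: Rmap_simp L1 algebra_simps)
  qed
next
  fix c :: real and p :: "oct \<times> oct"
  show "Rmap r l (c *\<^sub>R p) = c *\<^sub>R Rmap r l p"
  proof -
    obtain u v where "p = (u, v)" by (metis prod.exhaust)
    then show ?thesis by (simp add: Rmap_simp L2 L3 algebra_simps)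
  qed
qed

lemma Rmap_invol:
  assumes h: "r^2 + onorm2 l = 1"
  shows "Rmap r l (Rmap r l p) = p"
proof -
  obtain u v where Pair: "p = (u, v)" by (metis prod.exhaust)
  have 1: "r *\<^sub>R (r *\<^sub>R u + omul l v) + omul l (omul (oconj l) u - r *\<^sub>R v) = u"
  proof -
    have "r *\<^sub>R (r *\<^sub>R u + omul l v) + omul l (omul (oconj l) u - r *\<^sub>R v)
        = (r^2 + onorm2 l) *\<^sub>R u"
      by (simp add: L1 L2 L3 D1 algebra_simps power2_eq_square)
    then show ?thesis using h by simp
  qed
  have 2: "omul (oconj l) (r *\<^sub>R u + omul l v) - r *\<^sub>R (omul (oconj l) u - r *\<^sub>R v) = v"
  proof -
    have "omul (oconj l) (r *\<^sub>R u + omul l v) - r *\<^sub>R (omul (oconj l) u - r *\<^sub>R v)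
        = (r^2 + onorm2 l) *\<^sub>R v"
      by (simp add: L1 L2 L3 D2 algebra_simps power2_eq_square)
    then show ?thesis using h by simp
  qed
  show ?thesis using 1 2 Pair by (simp add: Rmap_simp)
qed

lemma Rmap_ds2:
  assumes h: "r^2 + onorm2 l = 1"
  shows "ds2 (Rmap r l p) (Rmap r l w) = ds2 p w"
proof -
  obtain u v where p: "p = (u, v)" by (metis prod.exhaust)
  obtain x e where w: "w = (x, e)" by (metis prod.exhaust)
  define al where "al = ip (omul l v) u"
  define be where "be = ip (omul l e) x"
  define T where "T = ore (omul (omul u (oconj v)) (omul e (oconj x)))"
  define P where "P = omul u (oconj v)"
  define Q where "Q = omul x (oconj e)"
  define a where "a = r * (onorm2 u - onorm2 v) + 2 * al"
  define b where "b = r * (onorm2 x - onorm2 e) + 2 * be"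
  define s where "s = r^2 + onorm2 l"
  have re: "ore (omul (omul (r *\<^sub>R u + omul l v) (oconj (omul (oconj l) u - r *\<^sub>R v)))
              (omul (omul (oconj l) x - r *\<^sub>R e) (oconj (r *\<^sub>R x + omul l e))))
     = a * b * onorm2 l - a * s * be - s * b * al + s^2 * T"
  proof -
    have "ore (omul (omul (r *\<^sub>R u + omul l v) (oconj (omul (oconj l) u - r *\<^sub>R v)))
              (omul (omul (oconj l) x - r *\<^sub>R e) (oconj (r *\<^sub>R x + omul l e))))
       = ip (omul (r *\<^sub>R u + omul l v) (oconj (omul (oconj l) u - r *\<^sub>R v)))
            (omul (r *\<^sub>R x + omul l e) (oconj (omul (oconj l) x - r *\<^sub>R e)))"
      by (rule B1)
    also have "\<dots> = ip (a *\<^sub>R l - s *\<^sub>R P) (b *\<^sub>R l - s *\<^sub>R Q)"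
      unfolding A3 a_def b_def s_def P_def Q_def al_def be_def ..
    also have "\<dots> = a * b * onorm2 l - a * s * ip l Q - s * b * ip P l + s^2 * ip P Q"
      by (rule C)
    also have "ip l Q = be" unfolding Q_def be_def by (rule B2)
    also have "ip P l = al" unfolding P_def al_def by (simp add: B3 B2)
    also have "ip P Q = T" unfolding P_def Q_def T_def by (simp add: B1)
    finally show ?thesis .
  qed
  show ?thesis
    unfolding p w Rmap_simp ds2_def Let_def prod.case A1 A2 re
    unfolding a_def b_def s_def al_def[symmetric] be_def[symmetric] T_def[symmetric]
    by (rule final[OF h])
qed

theorem proposition4p1:
  fixes r :: real and l :: oct
  assumes "r^2 + onorm2 l = 1"
  shows "isometry_g (Rmap r l)"
proof -
  have bl: "bounded_linear (Rmap r l)"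
    using Rmap_linear linear_conv_bounded_linear by blast
  have inv: "\<And>p. Rmap r l (Rmap r l p) = p" using Rmap_invol[OF assms] .
  have bij: "bij (Rmap r l)"
    by (metis inv bijI' )
  have invR: "inv (Rmap r l) = Rmap r l"
    by (rule inv_equality) (simp_all add: inv)
  have der: "\<And>p. (Rmap r l has_derivative Rmap r l) (at p)"
    using bl bounded_linear_imp_has_derivative by blast
  have fd: "\<And>p. frechet_derivative (Rmap r l) (at p) = Rmap r l"
    using der frechet_derivative_at by metis
  have dif: "\<And>p. Rmap r l differentiable (at p)"
    using der differentiable_def by blast
  show ?thesis
    unfolding isometry_g_def invR fd
    using bij dif Rmap_ds2[OF assms] by blast
qed

end
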